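(* Let $z_1,\dots,z_m\in\mathbb C$ and let $T$ be a spanning tree on the vertex set $\{z_1,\dots,z_m\}$ (edges being segments $e$ with endpoints $e^-,e^+$) such that for all $i,j$, $|z_i-z_j|$ is within a multiplicative constant $c\ge1$ of the length (sum of $|e^+-e^-|$ over edges) of the path in $T$ connecting $z_i$ and $z_j$. For a point $z_p$ and an edge $e$ let $d_+(z_p,e)=\max(|z_p-e^-|,|z_p-e^+|)$. Then $$\prod_{e\in T}\prod_{p=1}^m d_+(z_p,e)^{1/2}\le C\prod_{i<j}|z_i-z_j|,$$ where $C$ depends only on $m$ (and $c$). *)

theory Defs
  imports Complex_Main
begin

text \<open>Undirected graphs on the vertex set {0..<m}: an edge is a 2-element set of vertices.\<close>

definition adj :: "nat set set \<Rightarrow> nat \<Rightarrow> nat \<Rightarrow> bool" where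
  "adj E a b \<longleftrightarrow> {a, b} \<in> E"

definition simple_path :: "nat set set \<Rightarrow> nat list \<Rightarrow> nat \<Rightarrow> nat \<Rightarrow> bool" where
  "simple_path E vs i j \<longleftrightarrow> vs \<noteq> [] \<and> hd vs = i \<and> last vs = j \<and> distinct vs \<and>
     (\<forall>k. Suc k < length vs \<longrightarrow> adj E (vs ! k) (vs ! Suc k))"

definition is_graph :: "nat \<Rightarrow> nat set set \<Rightarrow> bool" where
  "is_graph m E \<longleftrightarrow> (\<forall>e\<in>E. card e = 2 \<and> e \<subseteq> {..<m})"

definition connected_graph :: "nat \<Rightarrow> nat set set \<Rightarrow> bool" where
  "connected_graph m E \<longleftrightarrow> (\<forall>i<m. \<forall>j<m. \<exists>vs. simple_path E vs i j)"

definition has_cycle :: "nat set set \<Rightarrow> bool" where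
  "has_cycle E \<longleftrightarrow> (\<exists>vs. length vs \<ge> 3 \<and> distinct vs \<and>
     (\<forall>k. Suc k < length vs \<longrightarrow> adj E (vs ! k) (vs ! Suc k)) \<and> adj E (last vs) (hd vs))"

definition spanning_tree :: "nat \<Rightarrow> nat set set \<Rightarrow> bool" where
  "spanning_tree m E \<longleftrightarrow> is_graph m E \<and> connected_graph m E \<and> \<not> has_cycle E"

definition path_length :: "(nat \<Rightarrow> complex) \<Rightarrow> nat list \<Rightarrow> real" where
  "path_length z vs = (\<Sum>k<length vs - 1. cmod (z (vs ! Suc k) - z (vs ! k)))"

definition dplus :: "(nat \<Rightarrow> complex) \<Rightarrow> nat \<Rightarrow> nat set \<Rightarrow> real" where
  "dplus z p e = Max ((\<lambda>v. cmod (z p - z v)) ` e)"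

end

theory Submission
  imports Defs
begin

lemma adj_sym: "adj E a b = adj E b a"
  unfolding adj_def by (simp add: insert_commute)

lemma simple_path_alt: "simple_path E vs i j \<longleftrightarrow> vs \<noteq> [] \<and> hd vs = i \<and> last vs = j \<and> distinct vs \<and>
   successively (adj E) vs"
  unfolding simple_path_def successively_conv_nth by blast

lemma has_cycle_alt: "has_cycle E \<longleftrightarrow> (\<exists>vs. length vs \<ge> 3 \<and> distinct vs \<and>
     successively (adj E) vs \<and> adj E (last vs) (hd vs))"
  unfolding has_cycle_def successively_conv_nth by blast

lemma uniq_aux:
  assumes "\<not> has_cycle E"
  shows "distinct (i#vs) \<Longrightarrow> distinct (i#ws) \<Longrightarrow> successively (adj E) (i#vs) \<Longrightarrow>
     successively (adj E) (i#ws) \<Longrightarrow> last (i#vs) = last (i#ws) \<Longrightarrow> vs = ws"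
proof (induction vs arbitrary: i ws)
  case Nil
  then show ?case by (cases ws) (auto dest: last_in_set split: if_splits)
next
  case (Cons x vs)
  show ?case
  proof (cases ws)
    case Nil
    then show ?thesis using Cons.prems by (auto dest: last_in_set split: if_splits)
  next
    case (Cons y ws')
    show ?thesis
    proof (cases "x = y")
      case True
      then show ?thesis using Cons.IH[of x ws'] Cons.prems \<open>ws = y # ws'\<close> by auto
    next
      case False
      have jx: "last (x#vs) \<in> set (y#ws')"
        using Cons.prems \<open>ws = y # ws'\<close> by (metis last_ConsR last_in_set list.distinct(1))
      obtain A u B where AuB: "x#vs = A @ u # B" "u \<in> set (y#ws')" "\<forall>a\<in>set A. a \<notin> set (y#ws')"
        using split_list_first_prop[of "x#vs" "\<lambda>a. a \<in> set (y#ws')"] jx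
        by (metis last_in_set list.distinct(1))
      obtain C D where CuD: "y#ws' = C @ u # D" using AuB(2) by (meson split_list)
      define cyc where "cyc = (i # A @ [u]) @ rev C"
      have s1: "successively (adj E) (i # A @ [u])"
        using Cons.prems(3) AuB(1) by (metis append.assoc append_Cons append_Nil successively_append_iff)
      have s2': "successively (adj E) (i # C @ [u])"
        using Cons.prems(4) CuD \<open>ws = y # ws'\<close> by (metis append.assoc append_Cons append_Nil successively_append_iff)
      have s2: "successively (adj E) (u # rev C)"
      proof -
        have eq: "(\<lambda>x y. adj E y x) = adj E" using adj_sym by blast
        have "successively (adj E) (rev (i # C @ [u]))"
          by (simp only: successively_rev eq s2')
        then have "successively (adj E) ((u # rev C) @ [i])" by simp
        then show ?thesis by (simp only: successively_append_iff)
      qed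
      have scyc: "successively (adj E) cyc"
      proof -
        have "rev C = [] \<or> (adj E u (hd (rev C)) \<and> successively (adj E) (rev C))"
          using s2 by (simp only: successively_Cons)
        moreover have "last (i # A @ [u]) = u" by simp
        ultimately show ?thesis unfolding cyc_def successively_append_iff using s1 by (metis successively.simps(1))
      qed
      have lastc: "last cyc = y"
        unfolding cyc_def using CuD by (cases C) auto
      have adjiy: "adj E y i" using Cons.prems(4) \<open>ws = y # ws'\<close> adj_sym by auto
      have dcyc: "distinct cyc"
        unfolding cyc_def using Cons.prems(1,2) AuB CuD \<open>ws = y # ws'\<close> by auto
      have lcyc: "length cyc \<ge> 3"
        unfolding cyc_def using False AuB(1) CuD by (cases A; cases C) auto
      have "has_cycle E" unfolding has_cycle_alt
        using scyc lastc adjiy dcyc lcyc by (intro exI[of _ cyc]) (auto simp: cyc_def)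
      then show ?thesis using assms by blast
    qed
  qed
qed

lemma path_unique:
  assumes "\<not> has_cycle E" "simple_path E vs i j" "simple_path E ws i j"
  shows "vs = ws"
proof -
  obtain vs' ws' where "vs = i # vs'" "ws = i # ws'" using assms unfolding simple_path_alt
    by (metis list.collapse)
  then show ?thesis using uniq_aux[OF assms(1), of i vs' ws'] assms(2,3) unfolding simple_path_alt by auto
qed


lemma prefix_path:
  assumes "simple_path E (xs @ ys) i j" "xs \<noteq> []"
  shows "simple_path E xs i (last xs)"
  using assms unfolding simple_path_alt
  by (auto simp: successively_append_iff hd_append)

lemma snoc_path:
  assumes "simple_path E xs i a" "adj E a b" "b \<notin> set xs"
  shows "simple_path E (xs @ [b]) i b"
  using assms unfolding simple_path_alt
  by (auto simp: successively_append_iff hd_append)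

lemma path_length_butlast: "path_length z (butlast vs) \<le> path_length z vs"
proof -
  have "path_length z (butlast vs) = (\<Sum>k<length vs - 2. cmod (z (vs ! Suc k) - z (vs ! k)))"
    unfolding path_length_def by (intro sum.cong) (auto simp: nth_butlast)
  also have "\<dots> \<le> path_length z vs"
    unfolding path_length_def by (intro sum_mono2) auto
  finally show ?thesis .
qed

definition PP :: "nat set set \<Rightarrow> nat \<Rightarrow> nat \<Rightarrow> nat list" where
  "PP T p q = (THE vs. simple_path T vs p q)"

definition par :: "nat set set \<Rightarrow> nat \<Rightarrow> nat \<Rightarrow> nat" where
  "par T p q = last (butlast (PP T p q))"

lemma PP_path:
  assumes "spanning_tree m T" "p < m" "q < m"
  shows "simple_path T (PP T p q) p q"
proof -
  obtain vs where vs: "simple_path T vs p q" using assms unfolding spanning_tree_def connected_graph_def by blast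
  have "\<not> has_cycle T" using assms unfolding spanning_tree_def by blast
  then have "\<And>ws. simple_path T ws p q \<Longrightarrow> ws = vs" using vs path_unique by blast
  then show ?thesis unfolding PP_def using vs by (metis theI)
qed

lemma PP_eq:
  assumes "spanning_tree m T" "p < m" "q < m" "simple_path T vs p q"
  shows "PP T p q = vs"
  using PP_path[OF assms(1-3)] assms(4) path_unique assms(1) unfolding spanning_tree_def by blast

lemma adj_lt:
  assumes "spanning_tree m T" "adj T a b"
  shows "a < m" "b < m"
  using assms unfolding spanning_tree_def is_graph_def adj_def by auto

lemma par_props:
  assumes "spanning_tree m T" "p < m" "q < m" "q \<noteq> p"
  shows "PP T p q = butlast (PP T p q) @ [q]" "butlast (PP T p q) \<noteq> []"
    "simple_path T (butlast (PP T p q)) p (par T p q)" "{par T p q, q} \<in> T" "par T p q < m"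
proof -
  have sp: "simple_path T (PP T p q) p q" using PP_path assms by blast
  then show e1: "PP T p q = butlast (PP T p q) @ [q]"
    unfolding simple_path_alt by (metis append_butlast_last_id)
  show ne: "butlast (PP T p q) \<noteq> []"
  proof
    assume "butlast (PP T p q) = []"
    then have "PP T p q = [q]" using e1 by simp
    then show False using sp assms(4) unfolding simple_path_alt by auto
  qed
  show sp2: "simple_path T (butlast (PP T p q)) p (par T p q)"
    using prefix_path[of T "butlast (PP T p q)" "[q]" p q] sp e1 ne unfolding par_def by simp
  have "successively (adj T) (butlast (PP T p q) @ [q])" using sp e1 unfolding simple_path_alt by metis
  then have "adj T (par T p q) q" using ne unfolding par_def by (simp add: successively_append_iff)
  then show "{par T p q, q} \<in> T" "par T p q < m" using adj_lt[OF assms(1)] unfolding adj_def by auto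
qed

lemma E_inj:
  assumes "spanning_tree m T" "p < m"
  shows "inj_on (\<lambda>q. {par T p q, q}) ({..<m} - {p})"
proof (rule inj_onI, rule ccontr)
  fix q q' assume q: "q \<in> {..<m} - {p}" and q': "q' \<in> {..<m} - {p}"
    and eq: "{par T p q, q} = {par T p q', q'}" and ne: "q \<noteq> q'"
  have pq: "par T p q' = q" "par T p q = q'" using eq ne by (auto simp: doubleton_eq_iff)
  have "PP T p q = butlast (PP T p q')"
    using PP_eq[OF assms, of q "butlast (PP T p q')"] par_props(3)[OF assms, of q'] q q' pq by auto
  moreover have "PP T p q' = butlast (PP T p q)"
    using PP_eq[OF assms, of q' "butlast (PP T p q)"] par_props(3)[OF assms, of q] q q' pq by auto
  ultimately have l: "length (PP T p q) = length (PP T p q') - 1" "length (PP T p q') = length (PP T p q) - 1"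
    by (metis length_butlast)+
  have "butlast (PP T p q) \<noteq> []" using par_props(2)[OF assms, of q] q by blast
  then have "length (PP T p q) > 1" by (cases "PP T p q") auto
  then show False using l by linarith
qed

lemma E_surj:
  assumes "spanning_tree m T" "p < m"
  shows "(\<lambda>q. {par T p q, q}) ` ({..<m} - {p}) = T"
proof
  show "(\<lambda>q. {par T p q, q}) ` ({..<m} - {p}) \<subseteq> T" using par_props(4)[OF assms] by auto
next
  show "T \<subseteq> (\<lambda>q. {par T p q, q}) ` ({..<m} - {p})"
  proof
    fix e assume e: "e \<in> T"
    then obtain a b where ab: "e = {a,b}" "a \<noteq> b"
      using assms(1) unfolding spanning_tree_def is_graph_def by (metis card_2_iff)
    have adjab: "adj T a b" "adj T b a" using e ab unfolding adj_def by (auto simp: insert_commute)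
    have am: "a < m" and bm: "b < m" using adj_lt[OF assms(1) adjab(1)] by auto
    have pa: "simple_path T (PP T p a) p a" and pb: "simple_path T (PP T p b) p b"
      using PP_path[OF assms] am bm by auto
    have key: "e \<in> (\<lambda>q. {par T p q, q}) ` ({..<m} - {p})"
      if ne: "a \<noteq> b" and xm: "x < m" and ym: "y < m" and exy: "e = {x, y}" and adjxy: "adj T x y"
        and px: "simple_path T (PP T p x) p x" and notin: "y \<notin> set (PP T p x)" for x y
    proof -
      have sp: "simple_path T (PP T p x @ [y]) p y" using snoc_path[OF px adjxy notin] .
      have "y \<noteq> p" using px notin unfolding simple_path_alt by (metis list.set_sel(1))
      moreover have "PP T p y = PP T p x @ [y]" using PP_eq[OF assms ym sp] .
      then have "par T p y = x" unfolding par_def using px unfolding simple_path_alt by simp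
      ultimately show ?thesis using ym exy by (auto simp: insert_commute)
    qed
    show "e \<in> (\<lambda>q. {par T p q, q}) ` ({..<m} - {p})"
    proof (cases "b \<in> set (PP T p a)")
      case False
      then show ?thesis using key[of a b] ab am bm adjab pa by blast
    next
      case True
      show ?thesis
      proof (cases "a \<in> set (PP T p b)")
        case False
        then show ?thesis using key[of b a] ab am bm adjab pb by (auto simp: insert_commute)
      next
        case True2: True
        obtain X Y where XY: "PP T p a = X @ b # Y" using True by (meson split_list)
        have "simple_path T (X @ [b]) p b" using prefix_path[of T "X @ [b]" Y p a] pa XY by simp
        then have "PP T p b = X @ [b]" using PP_eq[OF assms bm] by blast
        then have "a \<in> set X" using True2 ab(2) by auto
        moreover have "a \<in> set (b # Y)" using pa XY unfolding simple_path_alt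
          by (metis last_appendR last_in_set list.distinct(1))
        moreover have "distinct (X @ b # Y)" using pa XY unfolding simple_path_alt by metis
        ultimately show ?thesis by auto
      qed
    qed
  qed
qed


lemma prod_sym:
  fixes g :: "nat \<Rightarrow> nat \<Rightarrow> real"
  assumes sym: "\<And>p q. g p q = g q p"
  shows "(\<Prod>p<m. \<Prod>q\<in>{..<m} - {p}. g p q) = (\<Prod>i<m. \<Prod>j\<in>{i<..<m}. g i j) ^ 2"
proof -
  let ?S = "SIGMA i:{..<m}. {i<..<m}"
  have "(\<Prod>p<m. \<Prod>q\<in>{..<m} - {p}. g p q) = prod (case_prod g) (SIGMA p:{..<m}. {..<m} - {p})"
    by (rule prod.Sigma) auto
  also have "(SIGMA p:{..<m}. {..<m} - {p}) = ?S \<union> prod.swap ` ?S"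
    by (auto simp: image_iff)
  also have "prod (case_prod g) (?S \<union> prod.swap ` ?S) = prod (case_prod g) ?S * prod (case_prod g) (prod.swap ` ?S)"
    by (rule prod.union_disjoint) auto
  also have "prod (case_prod g) (prod.swap ` ?S) = prod (case_prod g) ?S"
    by (subst prod.reindex) (auto simp: sym intro!: prod.cong)
  also have "prod (case_prod g) ?S = (\<Prod>i<m. \<Prod>j\<in>{i<..<m}. g i j)"
    by (rule prod.Sigma[symmetric]) auto
  finally show ?thesis by (simp add: power2_eq_square)
qed

lemma dplus_pair: "dplus z p {a, b} = max (cmod (z p - z a)) (cmod (z p - z b))"
  unfolding dplus_def by simp

theorem lemmaA5:
  fixes m :: nat and c :: real
  assumes "c \<ge> 1"
  shows "\<exists>C::real. \<forall>(z :: nat \<Rightarrow> complex) (T :: nat set set).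
     spanning_tree m T \<and>
     (\<forall>i<m. \<forall>j<m. \<forall>vs. simple_path T vs i j \<longrightarrow>
        path_length z vs \<le> c * cmod (z i - z j) \<and> cmod (z i - z j) \<le> c * path_length z vs)
     \<longrightarrow> (\<Prod>e\<in>T. \<Prod>p<m. sqrt (dplus z p e))
           \<le> C * (\<Prod>i<m. \<Prod>j\<in>{i<..<m}. cmod (z i - z j))"
proof (intro exI[of _ "c ^ (m * (m - 1))"] allI impI, elim conjE)
  fix z :: "nat \<Rightarrow> complex" and T
  assume st: "spanning_tree m T"
    and H: "\<forall>i<m. \<forall>j<m. \<forall>vs. simple_path T vs i j \<longrightarrow>
        path_length z vs \<le> c * cmod (z i - z j) \<and> cmod (z i - z j) \<le> c * path_length z vs"
  let ?g = "\<lambda>p q. sqrt (cmod (z p - z q))"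
  have c0: "c \<ge> 0" using assms by simp
  have per: "0 \<le> (\<Prod>e\<in>T. sqrt (dplus z p e)) \<and>
     (\<Prod>e\<in>T. sqrt (dplus z p e)) \<le> c ^ (m - 1) * (\<Prod>q\<in>{..<m} - {p}. ?g p q)" if pm: "p < m" for p
  proof -
    have bij: "bij_betw (\<lambda>q. {par T p q, q}) ({..<m} - {p}) T"
      using E_inj[OF st pm] E_surj[OF st pm] by (simp add: bij_betw_def)
    have eq: "(\<Prod>e\<in>T. sqrt (dplus z p e)) = (\<Prod>q\<in>{..<m} - {p}. sqrt (dplus z p {par T p q, q}))"
      using prod.reindex_bij_betw[OF bij, of "\<lambda>e. sqrt (dplus z p e)"] by simp
    have bnd: "sqrt (dplus z p {par T p q, q}) \<le> c * ?g p q" if q: "q \<in> {..<m} - {p}" for q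
    proof -
      have qm: "q < m" "q \<noteq> p" using q by auto
      let ?vs = "PP T p q"
      have sp: "simple_path T ?vs p q" using PP_path[OF st pm qm(1)] .
      have sp2: "simple_path T (butlast ?vs) p (par T p q)" using par_props(3)[OF st pm qm] .
      have pm2: "par T p q < m" using par_props(5)[OF st pm qm] .
      have "cmod (z p - z (par T p q)) \<le> c * path_length z (butlast ?vs)"
        using H pm pm2 sp2 by blast
      also have "\<dots> \<le> c * path_length z ?vs"
        using path_length_butlast c0 by (simp add: mult_left_mono)
      also have "\<dots> \<le> c * (c * cmod (z p - z q))"
        using H pm qm sp c0 by (simp add: mult_left_mono)
      finally have d1: "cmod (z p - z (par T p q)) \<le> c\<^sup>2 * cmod (z p - z q)"
        by (simp add: power2_eq_square mult.assoc)
      have "cmod (z p - z q) \<le> c\<^sup>2 * cmod (z p - z q)"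
        using assms by (simp add: mult_le_cancel_right1 one_le_power)
      then have "dplus z p {par T p q, q} \<le> c\<^sup>2 * cmod (z p - z q)"
        using d1 by (simp add: dplus_pair)
      then have "sqrt (dplus z p {par T p q, q}) \<le> sqrt (c\<^sup>2 * cmod (z p - z q))"
        by (rule real_sqrt_le_mono)
      also have "\<dots> = c * ?g p q" using c0 by (simp add: real_sqrt_mult)
      finally show ?thesis .
    qed
    have "(\<Prod>q\<in>{..<m} - {p}. sqrt (dplus z p {par T p q, q})) \<le> (\<Prod>q\<in>{..<m} - {p}. c * ?g p q)"
    proof (intro prod_mono conjI)
      fix q assume q: "q \<in> {..<m} - {p}"
      show "0 \<le> sqrt (dplus z p {par T p q, q})" by (simp add: dplus_pair le_max_iff_disj)
      show "sqrt (dplus z p {par T p q, q}) \<le> c * ?g p q" using bnd[OF q] .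
    qed
    also have "\<dots> = c ^ (m - 1) * (\<Prod>q\<in>{..<m} - {p}. ?g p q)"
      using pm by (simp add: prod.distrib)
    finally show ?thesis using eq by (auto simp: dplus_pair le_max_iff_disj intro!: prod_nonneg)
  qed
  have "(\<Prod>e\<in>T. \<Prod>p<m. sqrt (dplus z p e)) = (\<Prod>p<m. \<Prod>e\<in>T. sqrt (dplus z p e))"
    by (rule prod.swap)
  also have "\<dots> \<le> (\<Prod>p<m. c ^ (m - 1) * (\<Prod>q\<in>{..<m} - {p}. ?g p q))"
    by (intro prod_mono) (use per in auto)
  also have "\<dots> = c ^ (m * (m - 1)) * (\<Prod>p<m. \<Prod>q\<in>{..<m} - {p}. ?g p q)"
    by (simp add: prod.distrib power_mult mult.commute[of m])
  also have "(\<Prod>p<m. \<Prod>q\<in>{..<m} - {p}. ?g p q) = (\<Prod>i<m. \<Prod>j\<in>{i<..<m}. ?g i j) ^ 2"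
    by (rule prod_sym) (simp add: norm_minus_commute)
  also have "\<dots> = (\<Prod>i<m. \<Prod>j\<in>{i<..<m}. cmod (z i - z j))"
    by (simp add: prod_power_distrib)
  finally show "(\<Prod>e\<in>T. \<Prod>p<m. sqrt (dplus z p e)) \<le> c ^ (m * (m - 1)) * (\<Prod>i<m. \<Prod>j\<in>{i<..<m}. cmod (z i - z j))" .
qed

end
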